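(* Let $G$ be a finite group, $U$ a $G$-universe, and $H\le G$. A finite $H$-set $T$ is admissible for the little disks operad $\mathcal D(U)$ if and only if there exists an injective $H$-equivariant map $T\to U$.
   Context: A $G$-universe $U$ is a countably infinite-dimensional real inner product space with an action of $G$ by isometries, which contains the trivial representation and contains each of its finite-dimensional subrepresentations infinitely often (it need not contain every representation). For a finite-dimensional subrepresentation $V\subset U$ with unit disk $D(V)$, a little disk is an affine map $D(V)\to D(V)$, $v\mapsto av+b$ with $a>0$; $\mathcal D_V(U)_n$ is the space of $n$-tuples of little disks with pairwise disjoint images, with $G$ acting by conjugation and $\Sigma_n$ by permutation. For $V\subseteq W$ the disk $v\mapsto av+b$ is sent to $w\mapsto aw+b$, and the little disks operad is $\mathcal D(U)=\operatorname{colim}_V\mathcal D_V(U)$ with operad structure from composition. For a finite $H$-set $T$ with $|T|=n$, choosing $T\cong\{1,\dots,n\}$ gives a homomorphism $H\to\Sigma_n$ with graph $\Gamma_T\le G\times\Sigma_n$; $T$ is admissible for $\mathcal O$ if $\mathcal O_n^{\Gamma_T}\neq\emptyset$. *)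

theory Defs
  imports "HOL-Analysis.Analysis" "HOL-Algebra.Group_Action"
begin

definition isometric_linear_action :: "('g, 'm) monoid_scheme \<Rightarrow> ('g \<Rightarrow> 'u::real_inner \<Rightarrow> 'u) \<Rightarrow> bool" where
  "isometric_linear_action G \<rho> \<longleftrightarrow>
     \<rho> \<one>\<^bsub>G\<^esub> = id \<and>
     (\<forall>g\<in>carrier G. \<forall>h\<in>carrier G. \<rho> (g \<otimes>\<^bsub>G\<^esub> h) = \<rho> g \<circ> \<rho> h) \<and>
     (\<forall>g\<in>carrier G. linear (\<rho> g) \<and> (\<forall>x. norm (\<rho> g x) = norm x))"

definition countably_infinite_dim :: "'u::real_vector itself \<Rightarrow> bool" where
  "countably_infinite_dim _ \<longleftrightarrow>
     (\<exists>B::'u set. independent B \<and> span B = UNIV \<and> countable B \<and> infinite B)"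

definition fin_dim_subspace :: "'u::real_vector set \<Rightarrow> bool" where
  "fin_dim_subspace V \<longleftrightarrow> (\<exists>B. finite B \<and> V = span B)"

definition fin_subrep :: "('g, 'm) monoid_scheme \<Rightarrow> ('g \<Rightarrow> 'u::real_inner \<Rightarrow> 'u) \<Rightarrow> 'u set \<Rightarrow> bool" where
  "fin_subrep G \<rho> V \<longleftrightarrow> fin_dim_subspace V \<and> (\<forall>g\<in>carrier G. \<rho> g ` V \<subseteq> V)"

definition rep_iso :: "('g, 'm) monoid_scheme \<Rightarrow> ('g \<Rightarrow> 'u::real_inner \<Rightarrow> 'u) \<Rightarrow> 'u set \<Rightarrow> 'u set \<Rightarrow> bool" where
  "rep_iso G \<rho> V W \<longleftrightarrow>
     (\<exists>f. linear f \<and> bij_betw f V W \<and> (\<forall>g\<in>carrier G. \<forall>v\<in>V. f (\<rho> g v) = \<rho> g (f v)))"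

definition G_universe :: "('g, 'm) monoid_scheme \<Rightarrow> ('g \<Rightarrow> 'u::real_inner \<Rightarrow> 'u) \<Rightarrow> bool" where
  "G_universe G \<rho> \<longleftrightarrow>
     countably_infinite_dim TYPE('u) \<and>
     isometric_linear_action G \<rho> \<and>
     (\<exists>v. v \<noteq> 0 \<and> (\<forall>g\<in>carrier G. \<rho> g v = v)) \<and>
     (\<forall>V. fin_subrep G \<rho> V \<longrightarrow>
        (\<exists>W :: nat \<Rightarrow> 'u set. (\<forall>k. fin_subrep G \<rho> (W k) \<and> rep_iso G \<rho> V (W k)) \<and>
           (\<forall>i j. i \<noteq> j \<longrightarrow> (\<forall>x\<in>W i. \<forall>y\<in>W j. inner x y = 0))))"

definition unit_disk :: "'u::real_normed_vector set \<Rightarrow> 'u set" where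
  "unit_disk V = {v \<in> V. norm v \<le> 1}"

text \<open>A little disk v \<mapsto> a v + b is recorded by its parameters (a, b).\<close>
definition disk_image :: "'u::real_normed_vector set \<Rightarrow> real \<times> 'u \<Rightarrow> 'u set" where
  "disk_image V d = (\<lambda>v. fst d *\<^sub>R v + snd d) ` unit_disk V"

definition little_disk :: "'u::real_normed_vector set \<Rightarrow> real \<times> 'u \<Rightarrow> bool" where
  "little_disk V d \<longleftrightarrow> fst d > 0 \<and> disk_image V d \<subseteq> unit_disk V"

definition DV :: "'u::real_normed_vector set \<Rightarrow> nat \<Rightarrow> (real \<times> 'u) list set" where
  "DV V n = {c. length c = n \<and> (\<forall>i<n. little_disk V (c ! i)) \<and>
               (\<forall>i<n. \<forall>j<n. i \<noteq> j \<longrightarrow> disk_image V (c ! i) \<inter> disk_image V (c ! j) = {})}"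

text \<open>D(U)_n = colim_V D_V(U)_n. Since the structure maps for V \<subseteq> W keep the parameters
(a,b) and are injective, the colimit (as a set) is the union.\<close>
definition DU :: "('g, 'm) monoid_scheme \<Rightarrow> ('g \<Rightarrow> 'u::real_inner \<Rightarrow> 'u) \<Rightarrow> nat \<Rightarrow> (real \<times> 'u) list set" where
  "DU G \<rho> n = (\<Union>V\<in>{V. fin_subrep G \<rho> V}. DV V n)"

text \<open>Action of (g, sigma) in G \<times> Sigma_n: g acts by conjugation,
g(v \<mapsto> a v + b)g^{-1} = (v \<mapsto> a v + g b), sigma permutes the entries.\<close>
definition act_GSigma :: "('g \<Rightarrow> 'u::real_inner \<Rightarrow> 'u) \<Rightarrow> 'g \<Rightarrow> (nat \<Rightarrow> nat) \<Rightarrow> (real \<times> 'u) list \<Rightarrow> (real \<times> 'u) list" where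
  "act_GSigma \<rho> g \<sigma> c =
     map (\<lambda>j. let d = c ! (inv_into {..<length c} \<sigma> j) in (fst d, \<rho> g (snd d))) [0..<length c]"

definition perm_of :: "'t set \<Rightarrow> ('t \<Rightarrow> nat) \<Rightarrow> ('g \<Rightarrow> 't \<Rightarrow> 't) \<Rightarrow> 'g \<Rightarrow> nat \<Rightarrow> nat" where
  "perm_of T e \<phi> h = (\<lambda>i. if i < card T then e (\<phi> h (inv_into T e i)) else i)"

definition Gamma_T :: "'g set \<Rightarrow> 't set \<Rightarrow> ('t \<Rightarrow> nat) \<Rightarrow> ('g \<Rightarrow> 't \<Rightarrow> 't) \<Rightarrow> ('g \<times> (nat \<Rightarrow> nat)) set" where
  "Gamma_T H T e \<phi> = {(h, perm_of T e \<phi> h) | h. h \<in> H}"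

text \<open>T is admissible for D(U) iff D(U)_n^{Gamma_T} is nonempty, for a choice of
identification T \<cong> {0..<n} (the condition is independent of this choice).\<close>
definition admissible_DU :: "('g, 'm) monoid_scheme \<Rightarrow> ('g \<Rightarrow> 'u::real_inner \<Rightarrow> 'u) \<Rightarrow> 'g set \<Rightarrow> 't set \<Rightarrow> ('g \<Rightarrow> 't \<Rightarrow> 't) \<Rightarrow> bool" where
  "admissible_DU G \<rho> H T \<phi> \<longleftrightarrow>
     (\<exists>e. bij_betw e T {..<card T} \<and>
        (\<exists>c \<in> DU G \<rho> (card T). \<forall>(h, \<sigma>) \<in> Gamma_T H T e \<phi>. act_GSigma \<rho> h \<sigma> c = c))"

end

theory Submission
  imports Defs
begin

lemma phi_bij:
  assumes "group_action (G\<lparr>carrier := H\<rparr>) T \<phi>" "h \<in> H"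
  shows "bij_betw (\<phi> h) T T"
proof -
  have "\<phi> h \<in> Bij T" using group_action.bij_prop0[OF assms(1)] assms(2) by simp
  thus ?thesis by (simp add: Bij_def)
qed
lemma perm_bij:
  assumes e: "bij_betw e T {..<card T}" and p: "bij_betw p T T"
  shows "bij_betw (perm_of T e (\<lambda>_. p) h) {..<card T} {..<card T}"
proof -
  have "bij_betw (e \<circ> p \<circ> inv_into T e) {..<card T} {..<card T}"
    by (meson bij_betw_inv_into bij_betw_trans e p)
  moreover have "\<And>i. i\<in>{..<card T} \<Longrightarrow> perm_of T e (\<lambda>_. p) h i = (e \<circ> p \<circ> inv_into T e) i"
    by (simp add: perm_of_def)
  ultimately show ?thesis using bij_betw_cong[of "{..<card T}" "perm_of T e (\<lambda>_. p) h" "e \<circ> p \<circ> inv_into T e"] by simp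
qed

lemma perm_bij':
  assumes e: "bij_betw e T {..<card T}" and p: "bij_betw (\<phi> h) T T"
  shows "bij_betw (perm_of T e \<phi> h) {..<card T} {..<card T}"
proof -
  have "perm_of T e \<phi> h = perm_of T e (\<lambda>_. \<phi> h) h" by (simp add: perm_of_def)
  thus ?thesis using perm_bij[OF e p] by simp
qed

lemma perm_apply:
  assumes e: "bij_betw e T {..<card T}" and t: "t \<in> T"
  shows "perm_of T e \<phi> h (e t) = e (\<phi> h t)"
proof -
  have "e t < card T" using e t bij_betwE by blast
  moreover have "inv_into T e (e t) = t" using e t by (simp add: bij_betw_def)
  ultimately show ?thesis by (simp add: perm_of_def)
qed

lemma act_nth:
  assumes "j < length c"
  shows "act_GSigma \<rho> g \<sigma> c ! j =
    (fst (c ! (inv_into {..<length c} \<sigma> j)), \<rho> g (snd (c ! (inv_into {..<length c} \<sigma> j))))"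
  using assms by (simp add: act_GSigma_def Let_def)

lemma act_length: "length (act_GSigma \<rho> g \<sigma> c) = length c"
  by (simp add: act_GSigma_def)

theorem mainTheorem8:
  fixes G :: "('g, 'm) monoid_scheme" and \<rho> :: "'g \<Rightarrow> 'u::real_inner \<Rightarrow> 'u"
    and H :: "'g set" and T :: "'t set" and \<phi> :: "'g \<Rightarrow> 't \<Rightarrow> 't"
  assumes "group G" and "finite (carrier G)" and "G_universe G \<rho>"
    and "subgroup H G"
    and "finite T" and "group_action (G\<lparr>carrier := H\<rparr>) T \<phi>"
  shows "admissible_DU G \<rho> H T \<phi> \<longleftrightarrow>
         (\<exists>f :: 't \<Rightarrow> 'u. inj_on f T \<and> (\<forall>h\<in>H. \<forall>t\<in>T. f (\<phi> h t) = \<rho> h (f t)))"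
proof
  have pb: "\<And>h. h \<in> H \<Longrightarrow> bij_betw (\<phi> h) T T" using phi_bij[OF assms(6)] by blast
  have HG: "H \<subseteq> carrier G" using assms(4) subgroup.subset by blast
  have ila: "isometric_linear_action G \<rho>" using assms(3) by (simp add: G_universe_def)
  have lin: "\<And>g. g \<in> carrier G \<Longrightarrow> linear (\<rho> g)" using ila by (simp add: isometric_linear_action_def)
  have comp: "\<And>g g'. g \<in> carrier G \<Longrightarrow> g' \<in> carrier G \<Longrightarrow> \<rho> g (\<rho> g' x) = \<rho> (g \<otimes>\<^bsub>G\<^esub> g') x" for x
    using ila by (simp add: isometric_linear_action_def)
  have one: "\<rho> \<one>\<^bsub>G\<^esub> = id" using ila by (simp add: isometric_linear_action_def)
  define n where "n = card T"
  {
    assume "admissible_DU G \<rho> H T \<phi>"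
    then obtain e c where e: "bij_betw e T {..<n}" and cD: "c \<in> DU G \<rho> n"
      and fx: "\<forall>(h, \<sigma>) \<in> Gamma_T H T e \<phi>. act_GSigma \<rho> h \<sigma> c = c"
      unfolding admissible_DU_def n_def by blast
    from cD obtain V where V: "fin_subrep G \<rho> V" and cV: "c \<in> DV V n" unfolding DU_def by blast
    have len: "length c = n" using cV by (simp add: DV_def)
    have zV: "0 \<in> V" using V unfolding fin_subrep_def fin_dim_subspace_def by (auto simp: span_zero)
    have cen: "snd d \<in> disk_image V d" for d
    proof -
      have "0 \<in> unit_disk V" using zV by (simp add: unit_disk_def)
      hence "fst d *\<^sub>R 0 + snd d \<in> disk_image V d" unfolding disk_image_def by blast
      thus ?thesis by simp
    qed
    define f where "f t = snd (c ! e t)" for t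
    have eT: "\<And>t. t \<in> T \<Longrightarrow> e t < n" using e bij_betwE by blast
    have einj: "inj_on e T" using e bij_betw_def by blast
    have "inj_on f T"
    proof (rule inj_onI)
      fix s t assume s: "s \<in> T" and t: "t \<in> T" and eq: "f s = f t"
      show "s = t"
      proof (rule ccontr)
        assume "s \<noteq> t"
        hence ne: "e s \<noteq> e t" using einj s t inj_on_eq_iff by metis
        have "disk_image V (c ! e s) \<inter> disk_image V (c ! e t) = {}"
          using cV ne eT[OF s] eT[OF t] by (simp add: DV_def)
        moreover have "f s \<in> disk_image V (c ! e s)" "f t \<in> disk_image V (c ! e t)"
          using cen f_def by auto
        ultimately show False using eq by auto
      qed
    qed
    moreover have "\<forall>h\<in>H. \<forall>t\<in>T. f (\<phi> h t) = \<rho> h (f t)"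
    proof (intro ballI)
      fix h t assume h: "h \<in> H" and t: "t \<in> T"
      define \<sigma> where "\<sigma> = perm_of T e \<phi> h"
      have "(h, \<sigma>) \<in> Gamma_T H T e \<phi>" using h by (auto simp: Gamma_T_def \<sigma>_def)
      hence act: "act_GSigma \<rho> h \<sigma> c = c" using fx by blast
      have e': "bij_betw e T {..<card T}" using e n_def by simp
      have sb: "bij_betw \<sigma> {..<n} {..<n}" using perm_bij'[of e T \<phi> h, OF e' pb[OF h]] n_def \<sigma>_def by simp
      have ht: "\<phi> h t \<in> T" using pb[OF h] t bij_betwE by blast
      have sj: "\<sigma> (e t) = e (\<phi> h t)" using perm_apply[OF e' t] \<sigma>_def by simp
      have inv: "inv_into {..<n} \<sigma> (e (\<phi> h t)) = e t"
        using sb eT[OF t] sj by (metis bij_betw_def inv_into_f_f lessThan_iff)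
      have "c ! e (\<phi> h t) = act_GSigma \<rho> h \<sigma> c ! e (\<phi> h t)" using act by simp
      also have "\<dots> = (fst (c ! e t), \<rho> h (snd (c ! e t)))"
        using act_nth[of "e (\<phi> h t)" c \<rho> h \<sigma>] eT[OF ht] len inv by simp
      finally show "f (\<phi> h t) = \<rho> h (f t)" by (simp add: f_def)
    qed
    ultimately show "\<exists>f :: 't \<Rightarrow> 'u. inj_on f T \<and> (\<forall>h\<in>H. \<forall>t\<in>T. f (\<phi> h t) = \<rho> h (f t))"
      by blast
  }
  {
    assume "\<exists>f :: 't \<Rightarrow> 'u. inj_on f T \<and> (\<forall>h\<in>H. \<forall>t\<in>T. f (\<phi> h t) = \<rho> h (f t))"
    then obtain f :: "'t \<Rightarrow> 'u" where finj: "inj_on f T"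
      and feq: "\<And>h t. h \<in> H \<Longrightarrow> t \<in> T \<Longrightarrow> f (\<phi> h t) = \<rho> h (f t)" by blast
    define K where "K = Max (insert 1 ((\<lambda>t. norm (f t)) ` T))"
    have Kge: "\<And>t. t \<in> T \<Longrightarrow> norm (f t) \<le> K" unfolding K_def using assms(5) by (intro Max_ge) auto
    have K1: "1 \<le> K" unfolding K_def using assms(5) by (intro Max_ge) auto
    define p where "p t = (1 / (2 * K)) *\<^sub>R f t" for t
    have pn: "\<And>t. t \<in> T \<Longrightarrow> norm (p t) \<le> 1/2"
    proof -
      fix t assume t: "t \<in> T"
      have "norm (p t) = norm (f t) / (2 * K)" using K1 by (simp add: p_def)
      also have "\<dots> \<le> K / (2 * K)" using Kge[OF t] K1 by (intro divide_right_mono) auto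
      also have "\<dots> = 1/2" using K1 by simp
      finally show "norm (p t) \<le> 1/2" .
    qed
    have pinj: "inj_on p T" using finj K1 unfolding p_def inj_on_def by auto
    have peq: "\<And>h t. h \<in> H \<Longrightarrow> t \<in> T \<Longrightarrow> p (\<phi> h t) = \<rho> h (p t)"
      unfolding p_def using feq lin HG linear_cmul by (metis subsetD)
    define D where "D = insert 1 ((\<lambda>(s, t). norm (p s - p t)) ` {(s, t). s \<in> T \<and> t \<in> T \<and> s \<noteq> t})"
    have Dfin: "finite D" unfolding D_def using assms(5)
      by (intro finite.insertI finite_imageI) (auto intro: finite_subset[of _ "T \<times> T"])
    have Dpos: "\<And>x. x \<in> D \<Longrightarrow> 0 < x" unfolding D_def using pinj by (auto simp: inj_on_def)
    define r where "r = Min D / 4"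
    have r0: "0 < r" unfolding r_def using Dfin Dpos by (simp add: D_def)
    have r1: "r \<le> 1/4" unfolding r_def using Dfin by (simp add: D_def)
    have rsep: "\<And>s t. s \<in> T \<Longrightarrow> t \<in> T \<Longrightarrow> s \<noteq> t \<Longrightarrow> 4 * r \<le> norm (p s - p t)"
    proof -
      fix s t assume "s \<in> T" "t \<in> T" "s \<noteq> t"
      hence "norm (p s - p t) \<in> D" unfolding D_def by (auto intro!: image_eqI[where x="(s,t)"])
      thus "4 * r \<le> norm (p s - p t)" unfolding r_def using Dfin by simp
    qed
    define B where "B = f ` T \<union> (\<lambda>(g, t). \<rho> g (f t)) ` (carrier G \<times> T)"
    define V where "V = span B"
    have Bfin: "finite B" unfolding B_def using assms(2,5) by auto
    have Vinv: "\<forall>g\<in>carrier G. \<rho> g ` V \<subseteq> V"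
    proof
      fix g assume g: "g \<in> carrier G"
      have "\<rho> g ` B \<subseteq> B"
      proof
        fix y assume "y \<in> \<rho> g ` B"
        then obtain x where x: "x \<in> B" and y: "y = \<rho> g x" by blast
        show "y \<in> B"
        proof (cases "x \<in> f ` T")
          case True
          then obtain t where "t \<in> T" "x = f t" by blast
          thus ?thesis using y g unfolding B_def by auto
        next
          case False
          then obtain g' t where g': "g' \<in> carrier G" and t: "t \<in> T" and xx: "x = \<rho> g' (f t)"
            using x unfolding B_def by auto
          have "y = \<rho> (g \<otimes>\<^bsub>G\<^esub> g') (f t)" using y xx comp g g' by simp
          moreover have "g \<otimes>\<^bsub>G\<^esub> g' \<in> carrier G" using g g' assms(1) by (simp add: group.subgroup_self subgroup.m_closed)
          ultimately show ?thesis using t unfolding B_def by auto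
        qed
      qed
      hence "span (\<rho> g ` B) \<subseteq> V" unfolding V_def by (simp add: span_mono)
      thus "\<rho> g ` V \<subseteq> V" unfolding V_def using linear_span_image[OF lin[OF g]] by simp
    qed
    have Vsub: "fin_subrep G \<rho> V" unfolding fin_subrep_def fin_dim_subspace_def V_def
      using Bfin Vinv V_def by blast
    have pV: "\<And>t. t \<in> T \<Longrightarrow> p t \<in> V" unfolding p_def V_def B_def
      by (intro span_scale span_base) auto
    obtain e where e: "bij_betw e T {..<n}"
      using finite_same_card_bij[OF assms(5) finite_lessThan[of n]] n_def card_lessThan[of n] by metis
    have eT: "\<And>t. t \<in> T \<Longrightarrow> e t < n" using e bij_betwE by blast
    have einv: "\<And>i. i < n \<Longrightarrow> inv_into T e i \<in> T \<and> e (inv_into T e i) = i"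
    proof -
      fix i assume "i < n"
      hence i: "i \<in> e ` T" using e by (simp add: bij_betw_def)
      show "inv_into T e i \<in> T \<and> e (inv_into T e i) = i"
        using inv_into_into[OF i] f_inv_into_f[OF i] by simp
    qed
    have eii: "\<And>t. t \<in> T \<Longrightarrow> inv_into T e (e t) = t" using e by (simp add: bij_betw_def)
    define c where "c = map (\<lambda>i. (r, p (inv_into T e i))) [0..<n]"
    have len: "length c = n" by (simp add: c_def)
    have cnth: "\<And>i. i < n \<Longrightarrow> c ! i = (r, p (inv_into T e i))" by (simp add: c_def)
    have sub: "\<And>t. t \<in> T \<Longrightarrow> disk_image V (r, p t) \<subseteq> unit_disk V"
    proof
      fix t x assume t: "t \<in> T" and x: "x \<in> disk_image V (r, p t)"
      then obtain v where v: "v \<in> V" "norm v \<le> 1" and xv: "x = r *\<^sub>R v + p t"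
        by (auto simp: disk_image_def unit_disk_def)
      have "x \<in> V" using xv v pV[OF t] unfolding V_def by (simp add: span_add span_scale)
      moreover have "norm x \<le> 1"
      proof -
        have "norm x \<le> norm (r *\<^sub>R v) + norm (p t)" using xv norm_triangle_ineq by blast
        also have "\<dots> \<le> r * 1 + 1/2"
        proof -
          have "r * norm v \<le> r * 1" using mult_left_mono[OF v(2), of r] r0 by linarith
          moreover have "norm (r *\<^sub>R v) = r * norm v" using r0 by simp
          ultimately show ?thesis using pn[OF t] by linarith
        qed
        finally show ?thesis using r1 by simp
      qed
      ultimately show "x \<in> unit_disk V" by (simp add: unit_disk_def)
    qed
    have disj: "\<And>s t. s \<in> T \<Longrightarrow> t \<in> T \<Longrightarrow> s \<noteq> t \<Longrightarrow> disk_image V (r, p s) \<inter> disk_image V (r, p t) = {}"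
    proof (rule ccontr)
      fix s t assume s: "s \<in> T" and t: "t \<in> T" and st: "s \<noteq> t"
        and "disk_image V (r, p s) \<inter> disk_image V (r, p t) \<noteq> {}"
      then obtain v w where v: "norm v \<le> 1" and w: "norm w \<le> 1" and eq: "r *\<^sub>R v + p s = r *\<^sub>R w + p t"
        by (auto simp: disk_image_def unit_disk_def)
      have "p s - p t = r *\<^sub>R (w - v)" using eq by (simp add: algebra_simps)
      hence "norm (p s - p t) = r * norm (w - v)" using r0 by simp
      also have "\<dots> \<le> r * 2"
      proof -
        have "norm (w - v) \<le> norm w + norm v" by (rule norm_triangle_ineq4)
        thus ?thesis using v w r0 by (intro mult_left_mono) auto
      qed
      finally show False using rsep[OF s t st] r0 by simp
    qed
    have cDV: "c \<in> DV V n"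
      unfolding DV_def
    proof (intro CollectI conjI allI impI len)
      fix i assume i: "i < n"
      show "little_disk V (c ! i)" using cnth[OF i] r0 sub einv[OF i] by (simp add: little_disk_def)
    next
      fix i j assume i: "i < n" and j: "j < n" and ij: "i \<noteq> j"
      have "inv_into T e i \<noteq> inv_into T e j" using einv[OF i] einv[OF j] ij by metis
      thus "disk_image V (c ! i) \<inter> disk_image V (c ! j) = {}"
        using cnth[OF i] cnth[OF j] disj einv[OF i] einv[OF j] by simp
    qed
    have cDU: "c \<in> DU G \<rho> n" unfolding DU_def using Vsub cDV by blast
    have fixd: "\<forall>(h, \<sigma>) \<in> Gamma_T H T e \<phi>. act_GSigma \<rho> h \<sigma> c = c"
    proof (clarsimp simp: Gamma_T_def)
      fix h assume h: "h \<in> H"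
      define \<sigma> where "\<sigma> = perm_of T e \<phi> h"
      have e': "bij_betw e T {..<card T}" using e n_def by simp
      have sb: "bij_betw \<sigma> {..<n} {..<n}" using perm_bij'[of e T \<phi> h, OF e' pb[OF h]] n_def \<sigma>_def by simp
      show "act_GSigma \<rho> h (perm_of T e \<phi> h) c = c"
        unfolding \<sigma>_def[symmetric]
      proof (rule nth_equalityI)
        show "length (act_GSigma \<rho> h \<sigma> c) = length c" by (rule act_length)
      next
        fix j assume "j < length (act_GSigma \<rho> h \<sigma> c)"
        hence j: "j < n" using act_length len by metis
        define i where "i = inv_into {..<n} \<sigma> j"
        have i: "i < n" and si: "\<sigma> i = j" using sb j unfolding i_def
          by (metis bij_betw_def bij_betw_inv_into bij_betwE lessThan_iff,
              metis bij_betw_def f_inv_into_f lessThan_iff)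
        define ti where "ti = inv_into T e i"
        have ti: "ti \<in> T" "e ti = i" using einv[OF i] ti_def by auto
        have "j = e (\<phi> h ti)" using si perm_apply[OF e' ti(1), of \<phi> h] ti(2) \<sigma>_def by simp
        hence ij: "inv_into T e j = \<phi> h ti" using eii pb[OF h] ti(1) bij_betwE by metis
        have "act_GSigma \<rho> h \<sigma> c ! j = (r, \<rho> h (p ti))"
          using act_nth[of j c \<rho> h \<sigma>] j len cnth[OF i] i_def ti_def by simp
        also have "\<dots> = c ! j" using cnth[OF j] ij peq[OF h ti(1)] by simp
        finally show "act_GSigma \<rho> h \<sigma> c ! j = c ! j" .
      qed
    qed
    show "admissible_DU G \<rho> H T \<phi>" unfolding admissible_DU_def
      using e cDU fixd n_def by blast
  }
qed

end
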